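(* Let $\mathcal{H}_1,\mathcal{H}_2$ be hypothesis classes and $\mathcal{H}=\mathcal{H}_1\cdot\mathcal{H}_2$. Then for all integers $t\ge0$, $\mathcal{S}(\mathcal{H},t)\le\mathcal{S}(\mathcal{H}_1,t)\cdot\mathcal{S}(\mathcal{H}_2,t)$.
   Context: Hypotheses are maps $\mathcal{X}\to\{-1,+1\}$; $\mathcal{H}_1\cdot\mathcal{H}_2=\{x\mapsto h_1(x)h_2(x):h_1\in\mathcal{H}_1,h_2\in\mathcal{H}_2\}$. A depth-$t$ $\mathcal{X}$-valued tree $\mathbf{x}$ is a sequence of maps $\mathbf{x}_s:\{\pm1\}^{s-1}\to\mathcal{X}$, $s=1,\dots,t$; write $\mathbf{x}_s(\epsilon)=\mathbf{x}_s(\epsilon_1,\dots,\epsilon_{s-1})$. $S(\mathcal{H},\mathbf{x})=\{\epsilon\in\{\pm1\}^t:\exists h\in\mathcal{H},\ \epsilon_s=h(\mathbf{x}_s(\epsilon))\ \forall s\le t\}$; $\mathcal{S}(\mathcal{H},t)=\max_{\mathbf{x}}|S(\mathcal{H},\mathbf{x})|$ over depth-$t$ trees for $t\ge1$, and $\mathcal{S}(\mathcal{H},0)=1$ if $\mathcal{H}\ne\emptyset$, $0$ otherwise. *)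

theory Defs
  imports Main
begin

text \<open>A depth-t tree is encoded as a single function on sign prefixes:
  node x_s(eps_1..eps_{s-1}) is tr [eps_1,...,eps_{s-1}] (0-indexed: position s reads tr (take s e)).\<close>

definition pm_hyp :: "('a \<Rightarrow> int) \<Rightarrow> bool" where
  "pm_hyp h \<longleftrightarrow> (\<forall>x. h x \<in> {-1, 1})"

definition prod_class :: "('a \<Rightarrow> int) set \<Rightarrow> ('a \<Rightarrow> int) set \<Rightarrow> ('a \<Rightarrow> int) set" where
  "prod_class H1 H2 = {(\<lambda>x. h1 x * h2 x) | h1 h2. h1 \<in> H1 \<and> h2 \<in> H2}"

definition pm_seqs :: "nat \<Rightarrow> int list set" where
  "pm_seqs t = {e. length e = t \<and> set e \<subseteq> {-1, 1}}"

definition tree_sign_patterns :: "('a \<Rightarrow> int) set \<Rightarrow> nat \<Rightarrow> (int list \<Rightarrow> 'a) \<Rightarrow> int list set" where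
  "tree_sign_patterns H t tr =
     {e \<in> pm_seqs t. \<exists>h\<in>H. \<forall>s<t. e ! s = h (tr (take s e))}"

definition seq_shatter :: "('a \<Rightarrow> int) set \<Rightarrow> nat \<Rightarrow> nat" where
  "seq_shatter H t =
     (if t = 0 then (if H \<noteq> {} then 1 else 0)
      else Max {card (tree_sign_patterns H t tr) | tr. True})"

end

theory Submission
  imports Defs
begin

definition Sh :: "('a \<Rightarrow> int) set \<Rightarrow> nat \<Rightarrow> nat" where
  "Sh H t = Max {card (tree_sign_patterns H t tr) | tr. True}"

lemma finite_pm_seqs: "finite (pm_seqs t)"
proof -
  have "pm_seqs t \<subseteq> {xs. set xs \<subseteq> {-1,1::int} \<and> length xs = t}"
    unfolding pm_seqs_def by auto
  moreover have "finite {xs. set xs \<subseteq> {-1,1::int} \<and> length xs = t}"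
    by (rule finite_lists_length_eq) auto
  ultimately show ?thesis by (rule finite_subset)
qed

lemma finite_tsp: "finite (tree_sign_patterns H t tr)"
  unfolding tree_sign_patterns_def using finite_pm_seqs by auto

lemma Sh_set_fin: "finite {card (tree_sign_patterns H t tr) | tr. True}"
proof -
  have "{card (tree_sign_patterns H t tr) | tr. True} \<subseteq> {..card (pm_seqs t)}"
    using finite_pm_seqs by (auto simp: tree_sign_patterns_def intro!: card_mono)
  then show ?thesis by (rule finite_subset) auto
qed

lemma card_le_Sh: "card (tree_sign_patterns H t tr) \<le> Sh H t"
  unfolding Sh_def by (rule Max_ge[OF Sh_set_fin]) auto

lemma Sh_attained: "\<exists>tr. Sh H t = card (tree_sign_patterns H t tr)"
proof -
  have "Sh H t \<in> {card (tree_sign_patterns H t tr) | tr. True}"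
    unfolding Sh_def by (rule Max_in[OF Sh_set_fin]) auto
  then show ?thesis by auto
qed

lemma tsp0: "tree_sign_patterns H 0 tr = (if H = {} then {} else {[]})"
  by (auto simp: tree_sign_patterns_def pm_seqs_def)

lemma Sh0: "Sh H 0 = (if H = {} then 0 else 1)"
  unfolding Sh_def tsp0 by auto

lemma seq_shatter_Sh: "seq_shatter H t = Sh H t"
  using Sh0[of H] unfolding seq_shatter_def Sh_def by simp

definition restr :: "('a \<Rightarrow> int) set \<Rightarrow> 'a \<Rightarrow> int \<Rightarrow> ('a \<Rightarrow> int) set" where
  "restr H x a = {h \<in> H. h x = a}"

lemma split_le:
  "Sh (restr H x 1) t + Sh (restr H x (-1)) t \<le> Sh H (Suc t)"
proof -
  obtain trp where p: "Sh (restr H x 1) t = card (tree_sign_patterns (restr H x 1) t trp)"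
    using Sh_attained by blast
  obtain trm where m: "Sh (restr H x (-1)) t = card (tree_sign_patterns (restr H x (-1)) t trm)"
    using Sh_attained by blast
  define tr' where "tr' = (\<lambda>l. case l of [] \<Rightarrow> x | a # p \<Rightarrow> if a = 1 then trp p else trm p)"
  let ?A = "(\<lambda>e. 1 # e) ` tree_sign_patterns (restr H x 1) t trp"
  let ?B = "(\<lambda>e. (-1) # e) ` tree_sign_patterns (restr H x (-1)) t trm"
  have sub: "?A \<union> ?B \<subseteq> tree_sign_patterns H (Suc t) tr'"
  proof
    fix e assume "e \<in> ?A \<union> ?B"
    then show "e \<in> tree_sign_patterns H (Suc t) tr'"
    proof
      assume "e \<in> ?A"
      then obtain e' h where e: "e = 1 # e'" "e' \<in> pm_seqs t" "h \<in> H" "h x = 1"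
        "\<forall>s<t. e' ! s = h (trp (take s e'))"
        by (auto simp: tree_sign_patterns_def restr_def)
      have "\<forall>s<Suc t. e ! s = h (tr' (take s e))"
      proof (intro allI impI)
        fix s assume "s < Suc t"
        then show "e ! s = h (tr' (take s e))"
          using e by (cases s) (auto simp: tr'_def)
      qed
      then show ?thesis using e by (auto simp: tree_sign_patterns_def pm_seqs_def)
    next
      assume "e \<in> ?B"
      then obtain e' h where e: "e = (-1) # e'" "e' \<in> pm_seqs t" "h \<in> H" "h x = -1"
        "\<forall>s<t. e' ! s = h (trm (take s e'))"
        by (auto simp: tree_sign_patterns_def restr_def)
      have "\<forall>s<Suc t. e ! s = h (tr' (take s e))"
      proof (intro allI impI)
        fix s assume "s < Suc t"
        then show "e ! s = h (tr' (take s e))"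
          using e by (cases s) (auto simp: tr'_def)
      qed
      then show ?thesis using e by (auto simp: tree_sign_patterns_def pm_seqs_def)
    qed
  qed
  have "card (?A \<union> ?B) = card ?A + card ?B"
    by (rule card_Un_disjoint) (auto simp: finite_tsp)
  also have "card ?A = Sh (restr H x 1) t" using p by (simp add: card_image)
  also have "card ?B = Sh (restr H x (-1)) t" using m by (simp add: card_image)
  finally have "Sh (restr H x 1) t + Sh (restr H x (-1)) t = card (?A \<union> ?B)" by simp
  also have "\<dots> \<le> card (tree_sign_patterns H (Suc t) tr')"
    by (rule card_mono[OF finite_tsp sub])
  also have "\<dots> \<le> Sh H (Suc t)" by (rule card_le_Sh)
  finally show ?thesis .
qed

definition PP :: "('a \<Rightarrow> int) set \<Rightarrow> ('a \<Rightarrow> int) set \<Rightarrow> (int list \<Rightarrow> int list \<Rightarrow> 'a)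
   \<Rightarrow> (int list \<Rightarrow> int list \<Rightarrow> 'a) \<Rightarrow> nat \<Rightarrow> (int list \<times> int list) set" where
  "PP H1 H2 T1 T2 t = {(e1, e2). e1 \<in> pm_seqs t \<and> e2 \<in> pm_seqs t \<and>
     (\<exists>h1\<in>H1. \<exists>h2\<in>H2. \<forall>s<t. e1 ! s = h1 (T1 (take s e1) (take s e2))
        \<and> e2 ! s = h2 (T2 (take s e1) (take s e2)))}"

lemma finite_PP: "finite (PP H1 H2 T1 T2 t)"
proof -
  have "PP H1 H2 T1 T2 t \<subseteq> pm_seqs t \<times> pm_seqs t" unfolding PP_def by auto
  then show ?thesis using finite_pm_seqs by (meson finite_SigmaI finite_subset)
qed

lemma PP_step:
  "PP H1 H2 T1 T2 (Suc t) \<subseteq> (\<Union>a\<in>{1,-1}. \<Union>b\<in>{1,-1}.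
     (\<lambda>(e1,e2). (a # e1, b # e2)) `
       PP (restr H1 (T1 [] []) a) (restr H2 (T2 [] []) b)
          (\<lambda>p q. T1 (a # p) (b # q)) (\<lambda>p q. T2 (a # p) (b # q)) t)"
proof
  fix z assume z: "z \<in> PP H1 H2 T1 T2 (Suc t)"
  obtain e1 e2 where z12: "z = (e1, e2)" by (cases z)
  obtain h1 h2 where h: "h1 \<in> H1" "h2 \<in> H2"
    "\<forall>s<Suc t. e1 ! s = h1 (T1 (take s e1) (take s e2)) \<and> e2 ! s = h2 (T2 (take s e1) (take s e2))"
    and pm: "e1 \<in> pm_seqs (Suc t)" "e2 \<in> pm_seqs (Suc t)"
    using z unfolding z12 PP_def by auto
  obtain a e1' where e1: "e1 = a # e1'" using pm by (cases e1) (auto simp: pm_seqs_def)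
  obtain b e2' where e2: "e2 = b # e2'" using pm by (cases e2) (auto simp: pm_seqs_def)
  have ab: "a \<in> {1,-1}" "b \<in> {1,-1}" using pm e1 e2 by (auto simp: pm_seqs_def)
  have pm': "e1' \<in> pm_seqs t" "e2' \<in> pm_seqs t" using pm e1 e2 by (auto simp: pm_seqs_def)
  have h0: "h1 (T1 [] []) = a" "h2 (T2 [] []) = b" using h(3)[rule_format, of 0] e1 e2 by auto
  have hs: "\<forall>s<t. e1' ! s = h1 (T1 (a # take s e1') (b # take s e2'))
        \<and> e2' ! s = h2 (T2 (a # take s e1') (b # take s e2'))"
  proof (intro allI impI)
    fix s assume "s < t"
    then show "e1' ! s = h1 (T1 (a # take s e1') (b # take s e2'))
        \<and> e2' ! s = h2 (T2 (a # take s e1') (b # take s e2'))"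
      using h(3)[rule_format, of "Suc s"] e1 e2 by auto
  qed
  have "(e1', e2') \<in> PP (restr H1 (T1 [] []) a) (restr H2 (T2 [] []) b)
          (\<lambda>p q. T1 (a # p) (b # q)) (\<lambda>p q. T2 (a # p) (b # q)) t"
  proof -
    have r1: "h1 \<in> restr H1 (T1 [] []) a" using h h0 by (simp add: restr_def)
    have r2: "h2 \<in> restr H2 (T2 [] []) b" using h h0 by (simp add: restr_def)
    show ?thesis unfolding PP_def mem_Collect_eq case_prod_conv
      using pm' hs r1 r2 by blast
  qed
  then have "z \<in> (\<lambda>(e1,e2). (a # e1, b # e2)) `
       PP (restr H1 (T1 [] []) a) (restr H2 (T2 [] []) b)
          (\<lambda>p q. T1 (a # p) (b # q)) (\<lambda>p q. T2 (a # p) (b # q)) t"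
    unfolding z12 e1 e2 by (rule rev_image_eqI) simp
  then show "z \<in> (\<Union>a\<in>{1,-1}. \<Union>b\<in>{1,-1}.
     (\<lambda>(e1,e2). (a # e1, b # e2)) `
       PP (restr H1 (T1 [] []) a) (restr H2 (T2 [] []) b)
          (\<lambda>p q. T1 (a # p) (b # q)) (\<lambda>p q. T2 (a # p) (b # q)) t)"
    using ab by blast
qed

lemma PP_bound: "card (PP H1 H2 T1 T2 t) \<le> Sh H1 t * Sh H2 t"
proof (induction t arbitrary: H1 H2 T1 T2)
  case 0
  have "PP H1 H2 T1 T2 0 \<subseteq> (if H1 = {} \<or> H2 = {} then {} else {([], [])})"
    by (auto simp: PP_def pm_seqs_def)
  then have "card (PP H1 H2 T1 T2 0) \<le> card (if H1 = {} \<or> H2 = {} then {} else {([], [])} :: (int list \<times> int list) set)"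
    by (intro card_mono) auto
  then show ?case by (auto simp: Sh0 split: if_splits)
next
  case (Suc t)
  define x1 where "x1 = T1 [] []"
  define x2 where "x2 = T2 [] []"
  let ?Q = "\<lambda>a b. (\<lambda>(e1,e2). (a # e1, b # e2)) `
       PP (restr H1 x1 a) (restr H2 x2 b)
          (\<lambda>p q. T1 (a # p) (b # q)) (\<lambda>p q. T2 (a # p) (b # q)) t"
  have cq: "card (?Q a b) \<le> Sh (restr H1 x1 a) t * Sh (restr H2 x2 b) t" for a b
    using card_image_le[OF finite_PP] Suc.IH le_trans by blast
  have sub: "PP H1 H2 T1 T2 (Suc t) \<subseteq> ?Q 1 1 \<union> ?Q 1 (-1) \<union> ?Q (-1) 1 \<union> ?Q (-1) (-1)"
    using PP_step[of H1 H2 T1 T2 t] unfolding x1_def x2_def by auto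
  have "card (PP H1 H2 T1 T2 (Suc t)) \<le> card (?Q 1 1 \<union> ?Q 1 (-1) \<union> ?Q (-1) 1 \<union> ?Q (-1) (-1))"
    by (rule card_mono[OF _ sub]) (auto intro: finite_PP)
  also have "\<dots> \<le> card (?Q 1 1) + card (?Q 1 (-1)) + card (?Q (-1) 1) + card (?Q (-1) (-1))"
    by (meson add_mono card_Un_le le_refl order_trans)
  also have "\<dots> \<le> Sh (restr H1 x1 1) t * Sh (restr H2 x2 1) t + Sh (restr H1 x1 1) t * Sh (restr H2 x2 (-1)) t
      + Sh (restr H1 x1 (-1)) t * Sh (restr H2 x2 1) t + Sh (restr H1 x1 (-1)) t * Sh (restr H2 x2 (-1)) t"
    by (intro add_mono cq)
  also have "\<dots> = (Sh (restr H1 x1 1) t + Sh (restr H1 x1 (-1)) t) * (Sh (restr H2 x2 1) t + Sh (restr H2 x2 (-1)) t)"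
    by (simp add: algebra_simps)
  also have "\<dots> \<le> Sh H1 (Suc t) * Sh H2 (Suc t)"
    by (intro mult_le_mono split_le)
  finally show ?case .
qed

theorem mainTheorem15:
  fixes H1 H2 :: "('a \<Rightarrow> int) set" and t :: nat
  assumes "\<forall>h\<in>H1. pm_hyp h" and "\<forall>h\<in>H2. pm_hyp h"
  shows "seq_shatter (prod_class H1 H2) t \<le> seq_shatter H1 t * seq_shatter H2 t"
proof -
  obtain tr where tr: "Sh (prod_class H1 H2) t = card (tree_sign_patterns (prod_class H1 H2) t tr)"
    using Sh_attained by blast
  define T where "T = (\<lambda>a b. tr (map2 (*) a b))"
  have sub: "tree_sign_patterns (prod_class H1 H2) t tr \<subseteq> (\<lambda>(a, b). map2 (*) a b) ` PP H1 H2 T T t"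
  proof
    fix e assume "e \<in> tree_sign_patterns (prod_class H1 H2) t tr"
    then obtain h1 h2 where e: "e \<in> pm_seqs t" "h1 \<in> H1" "h2 \<in> H2"
      "\<forall>s<t. e ! s = h1 (tr (take s e)) * h2 (tr (take s e))"
      by (auto simp: tree_sign_patterns_def prod_class_def)
    define e1 where "e1 = map (\<lambda>s. h1 (tr (take s e))) [0..<t]"
    define e2 where "e2 = map (\<lambda>s. h2 (tr (take s e))) [0..<t]"
    have len: "length e = t" using e by (simp add: pm_seqs_def)
    have me: "map2 (*) e1 e2 = e"
      by (rule nth_equalityI) (auto simp: e1_def e2_def len e(4))
    have tk: "map2 (*) (take s e1) (take s e2) = take s e" for s
      using me by (metis take_map take_zip)
    have pm1: "e1 \<in> pm_seqs t" using assms(1) e(2) by (auto simp: e1_def pm_seqs_def pm_hyp_def)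
    have pm2: "e2 \<in> pm_seqs t" using assms(2) e(3) by (auto simp: e2_def pm_seqs_def pm_hyp_def)
    have "(e1, e2) \<in> PP H1 H2 T T t"
    proof -
      have "\<forall>s<t. e1 ! s = h1 (T (take s e1) (take s e2)) \<and> e2 ! s = h2 (T (take s e1) (take s e2))"
        unfolding T_def tk by (simp add: e1_def e2_def)
      then show ?thesis unfolding PP_def mem_Collect_eq case_prod_conv using pm1 pm2 e(2,3) by blast
    qed
    then show "e \<in> (\<lambda>(a, b). map2 (*) a b) ` PP H1 H2 T T t" using me by force
  qed
  have "Sh (prod_class H1 H2) t \<le> card ((\<lambda>(a, b). map2 (*) a b) ` PP H1 H2 T T t)"
    unfolding tr by (rule card_mono[OF _ sub]) (simp add: finite_PP)
  also have "\<dots> \<le> card (PP H1 H2 T T t)" by (rule card_image_le[OF finite_PP])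
  also have "\<dots> \<le> Sh H1 t * Sh H2 t" by (rule PP_bound)
  finally show ?thesis by (simp add: seq_shatter_Sh)
qed

end
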